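(* Let $p\ge 2$, $w\in\mathbb{R}$, $z\in\mathbb{R}^{p-1}$, $\lambda_2\ge 0$ and $\lambda_1>0$. Then the optimization problem \[ \min_{\beta^+\in\mathbb{R},\,\beta^-\in\mathbb{R},\,\theta\in\mathbb{R}^{p-1}}\ \frac12\bigl(w-(\beta^+-\beta^-)\bigr)^2+\frac12\|z-\theta\|_2^2+\lambda_1(\beta^++\beta^-)+\lambda_2\|\theta\|_1 \] subject to $\beta^+\ge 0$, $\beta^-\ge 0$, $\|\theta\|_1\le \beta^++\beta^-$, has a unique solution $(\hat\beta^+,\hat\beta^-,\hat\theta)$.
   Context: $\|\cdot\|_1$ and $\|\cdot\|_2$ denote the $\ell_1$ and Euclidean norms on $\mathbb{R}^{p-1}$. The tuning parameters $\lambda_1,\lambda_2$ are nonnegative. *)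

theory Defs
  imports "HOL-Analysis.Analysis"
begin

definition l1norm :: "real ^ 'n \<Rightarrow> real" where
  "l1norm x = (\<Sum>i\<in>UNIV. \<bar>x $ i\<bar>)"

definition objective :: "real \<Rightarrow> real ^ 'n \<Rightarrow> real \<Rightarrow> real \<Rightarrow> real \<Rightarrow> real \<Rightarrow> real ^ 'n \<Rightarrow> real" where
  "objective w z lam1 lam2 bp bm \<theta> =
     (1/2) * (w - (bp - bm))^2 + (1/2) * (norm (z - \<theta>))^2 + lam1 * (bp + bm) + lam2 * l1norm \<theta>"

definition feasible :: "real \<Rightarrow> real \<Rightarrow> real ^ 'n \<Rightarrow> bool" where
  "feasible bp bm \<theta> \<longleftrightarrow> bp \<ge> 0 \<and> bm \<ge> 0 \<and> l1norm \<theta> \<le> bp + bm"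

end

theory Submission
  imports Defs
begin

lemma l1_nonneg: "l1norm x \<ge> 0"
  unfolding l1norm_def by (simp add: sum_nonneg)

lemma l1_mid: "l1norm ((1/2) *\<^sub>R (a + b)) \<le> (l1norm a + l1norm b) / 2"
proof -
  have "l1norm ((1/2) *\<^sub>R (a + b)) = (\<Sum>i\<in>UNIV. \<bar>a $ i + b $ i\<bar> / 2)"
    unfolding l1norm_def by (simp add: abs_mult)
  also have "\<dots> \<le> (\<Sum>i\<in>UNIV. (\<bar>a $ i\<bar> + \<bar>b $ i\<bar>) / 2)"
    by (rule sum_mono) (simp add: divide_right_mono abs_triangle_ineq)
  also have "\<dots> = (l1norm a + l1norm b) / 2"
    unfolding l1norm_def by (simp add: sum.distrib sum_divide_distrib[symmetric])
  finally show ?thesis .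
qed

lemma l1_cont: "continuous_on A (\<lambda>x. l1norm (f x :: real ^ 'n))" if "continuous_on A f"
  unfolding l1norm_def
  by (intro continuous_intros that)

lemma norm_mid: fixes z a b :: "real ^ 'n"
  shows "(norm (z - (1/2) *\<^sub>R (a + b)))^2 =
    ((norm (z - a))^2 + (norm (z - b))^2) / 2 - (norm (a - b))^2 / 4"
  by (simp add: power2_norm_eq_inner inner_diff_left inner_diff_right inner_add_left
      inner_add_right inner_commute algebra_simps) (simp add: field_simps)

theorem lemma1:
  fixes w :: real and z :: "real ^ 'n" and lam1 lam2 :: real
  assumes "lam2 \<ge> 0" and "lam1 > 0"
  shows "\<exists>!(bp, bm, \<theta>). feasible bp bm \<theta> \<and>
           (\<forall>bp' bm' \<theta>'. feasible bp' bm' \<theta>' \<longrightarrow>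
              objective w z lam1 lam2 bp bm \<theta> \<le> objective w z lam1 lam2 bp' bm' \<theta>')"
proof -
  define F where "F p = objective w z lam1 lam2 (fst p) (fst (snd p)) (snd (snd p))"
    for p :: "real \<times> real \<times> (real ^ 'n)"
  define C where "C = F (0, 0, 0)"
  define S where "S = {p. fst p \<ge> 0 \<and> fst (snd p) \<ge> 0 \<and>
      l1norm (snd (snd p)) \<le> fst p + fst (snd p) \<and> F p \<le> C}"
  have contF: "continuous_on A F" for A
    unfolding F_def objective_def
    by (intro continuous_intros l1_cont)
  have "closed S"
    unfolding S_def
    by (intro closed_Collect_conj closed_Collect_le continuous_intros contF l1_cont)
  moreover have "bounded S"
  proof -
    have "norm p \<le> 3 * (C / lam1)" if "p \<in> S" for p
    proof -
      obtain bp bm th where p: "p = (bp, bm, th)" by (cases p) auto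
      have f: "bp \<ge> 0" "bm \<ge> 0" "l1norm th \<le> bp + bm" "F p \<le> C"
        using that p S_def by auto
      have "lam1 * (bp + bm) \<le> F p"
        using f assms l1_nonneg[of th]
        unfolding p F_def objective_def by (simp add: mult_nonneg_nonneg)
      hence s: "bp + bm \<le> C / lam1" using f assms by (simp add: field_simps)
      have "norm p \<le> norm bp + norm (bm, th)" unfolding p by (rule norm_Pair_le)
      also have "\<dots> \<le> norm bp + (norm bm + norm th)" using norm_Pair_le[of bm th] by simp
      also have "\<dots> \<le> bp + (bm + (bp + bm))"
        using f norm_le_l1_cart[of th] unfolding l1norm_def by auto
      also have "\<dots> \<le> 3 * (C / lam1)" using s f by linarith
      finally show ?thesis .
    qed
    thus ?thesis unfolding bounded_iff by blast
  qed
  ultimately have "compact S" by (simp add: compact_eq_bounded_closed)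
  moreover have "(0, 0, 0) \<in> S" unfolding S_def C_def by (simp add: l1norm_def)
  ultimately obtain x where xS: "x \<in> S" and xmin: "\<forall>y\<in>S. F x \<le> F y"
    using continuous_attains_inf[of S F] contF by blast
  have minall: "F x \<le> F (bp, bm, th)" if "feasible bp bm th" for bp bm th
  proof (cases "(bp, bm, th) \<in> S")
    case True thus ?thesis using xmin by blast
  next
    case False
    hence "F (bp, bm, th) > C" using that unfolding S_def feasible_def by auto
    thus ?thesis using xS unfolding S_def by auto
  qed
  obtain bp0 bm0 th0 where x: "x = (bp0, bm0, th0)" by (cases x) auto
  show ?thesis
  proof (rule ex1I[of _ x])
    show "case x of (bp, bm, \<theta>) \<Rightarrow> feasible bp bm \<theta> \<and>
           (\<forall>bp' bm' \<theta>'. feasible bp' bm' \<theta>' \<longrightarrow>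
              objective w z lam1 lam2 bp bm \<theta> \<le> objective w z lam1 lam2 bp' bm' \<theta>')"
      using xS minall unfolding x S_def feasible_def F_def by auto
  next
    fix y
    assume y: "case y of (bp, bm, \<theta>) \<Rightarrow> feasible bp bm \<theta> \<and>
           (\<forall>bp' bm' \<theta>'. feasible bp' bm' \<theta>' \<longrightarrow>
              objective w z lam1 lam2 bp bm \<theta> \<le> objective w z lam1 lam2 bp' bm' \<theta>')"
    obtain bp1 bm1 th1 where yy: "y = (bp1, bm1, th1)" by (cases y) auto
    have fx: "feasible bp0 bm0 th0" using xS unfolding x S_def feasible_def by auto
    have fy: "feasible bp1 bm1 th1" using y yy by auto
    have ymin: "\<And>bp' bm' th'. feasible bp' bm' th' \<Longrightarrow>
        objective w z lam1 lam2 bp1 bm1 th1 \<le> objective w z lam1 lam2 bp' bm' th'"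
      using y yy by auto
    have xmin': "\<And>bp' bm' th'. feasible bp' bm' th' \<Longrightarrow>
        objective w z lam1 lam2 bp0 bm0 th0 \<le> objective w z lam1 lam2 bp' bm' th'"
      using minall unfolding x F_def by auto
    define Ob where "Ob = objective w z lam1 lam2"
    have eq: "Ob bp0 bm0 th0 = Ob bp1 bm1 th1"
      using ymin[OF fx] xmin'[OF fy] unfolding Ob_def by linarith
    define mp where "mp = (bp0 + bp1) / 2"
    define mm where "mm = (bm0 + bm1) / 2"
    define mt where "mt = (1/2) *\<^sub>R (th0 + th1)"
    have fm: "feasible mp mm mt"
      using fx fy l1_mid[of th0 th1] unfolding feasible_def mp_def mm_def mt_def by (auto simp: field_simps)
    have sq: "(w - (mp - mm))^2 = ((w - (bp0 - bm0))^2 + (w - (bp1 - bm1))^2) / 2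
         - ((bp0 - bm0) - (bp1 - bm1))^2 / 4"
      unfolding mp_def mm_def by (simp add: power2_eq_square field_simps)
    have "Ob mp mm mt \<le> (Ob bp0 bm0 th0 + Ob bp1 bm1 th1) / 2
         - ((bp0 - bm0) - (bp1 - bm1))^2 / 8 - (norm (th0 - th1))^2 / 8"
    proof -
      have l0: "lam2 * l1norm mt \<le> lam2 * ((l1norm th0 + l1norm th1) / 2)"
        using l1_mid[of th0 th1] assms unfolding mt_def by (metis mult_left_mono)
      have l: "lam2 * l1norm mt \<le> (lam2 * l1norm th0 + lam2 * l1norm th1) / 2"
        using l0 by (simp add: field_simps)
      have m: "lam1 * (mp + mm) = (lam1 * (bp0 + bm0) + lam1 * (bp1 + bm1)) / 2"
        unfolding mp_def mm_def by (simp add: field_simps)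
      show ?thesis
        unfolding Ob_def objective_def
        using sq norm_mid[of z th0 th1, folded mt_def] l m by argo
    qed
    moreover have "Ob bp0 bm0 th0 \<le> Ob mp mm mt" using xmin'[OF fm] unfolding Ob_def .
    ultimately have "((bp0 - bm0) - (bp1 - bm1))^2 / 8 + (norm (th0 - th1))^2 / 8 \<le> 0"
      using eq by argo
    moreover have "0 \<le> ((bp0 - bm0) - (bp1 - bm1))^2" "0 \<le> (norm (th0 - th1))^2" by simp_all
    ultimately have "((bp0 - bm0) - (bp1 - bm1))^2 = 0" "(norm (th0 - th1))^2 = 0" by argo+
    hence d: "bp0 - bm0 = bp1 - bm1" and t: "th0 = th1" by simp_all
    have "lam1 * (bp0 + bm0) = lam1 * (bp1 + bm1)"
      using eq d t unfolding Ob_def objective_def by simp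
    hence "bp0 + bm0 = bp1 + bm1" using assms by simp
    hence "bp1 = bp0" "bm1 = bm0" using d by linarith+
    thus "y = x" using yy x t by simp
  qed
qed

end
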